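(* Let $H=(V_H,E_H)$ be a graph on $n$ vertices with vertex weights $c:V_H\to[0,1]$, $y\mapsto c_y$. Let $T\subseteq V_H$ with $|T|=n'=n/2$, let $k\le n'/12$ be an integer, and let $S$ be a uniformly random subset of $T$ of size $k$. Then $$\Pr\Big\{\forall x\in V_H:\ \sum_{\substack{(x,y)\in E_H\\ y\in S}}c_y\le\frac{4k}{n'}\sum_{\substack{(x,y)\in E_H\\ y\in V_H\setminus S}}c_y+2\log n\Big\}\ \ge\ 1-o(1),$$ where $o(1)\to0$ as $n\to\infty$. *)

theory Defs
  imports "HOL-Probability.Probability"
begin

definition simple_graph :: "'a set \<Rightarrow> ('a \<times> 'a) set \<Rightarrow> bool" where
  "simple_graph V E \<longleftrightarrow> finite V \<and> E \<subseteq> V \<times> V \<and> sym E \<and> irrefl E"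

end

theory Submission
  imports Defs "HOL-Real_Asymp.Real_Asymp"
begin

lemma binom_ratio:
  "j \<le> k \<Longrightarrow> k \<le> N \<Longrightarrow>
   real ((N - j) choose (k - j)) * real N ^ j \<le> real k ^ j * real (N choose k)"
proof (induction j)
  case 0 then show ?case by simp
next
  case (Suc j)
  have IH: "real ((N - j) choose (k - j)) * real N ^ j \<le> real k ^ j * real (N choose k)"
    using Suc by simp
  have kj: "0 < k - j" using Suc.prems by simp
  have eq: "(k - j) * ((N - j) choose (k - j)) = (N - j) * ((N - j - 1) choose (k - j - 1))"
    using times_binomial_minus1_eq[OF kj, of "N - j"] by simp
  have Nj: "real (N - j) > 0" using Suc.prems by simp
  have eq2: "real ((N - Suc j) choose (k - Suc j)) = real (k - j) / real (N - j) * real ((N - j) choose (k - j))"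
  proof -
    have "real (k - j) * real ((N - j) choose (k - j)) = real (N - j) * real ((N - Suc j) choose (k - Suc j))"
    proof -
      have e1: "N - Suc j = N - j - 1" "k - Suc j = k - j - 1" by simp_all
      show ?thesis unfolding e1 of_nat_mult[symmetric] using eq by (simp only:)
    qed
    then show ?thesis using Nj by (simp add: field_simps)
  qed
  have key: "real (k - j) * real N \<le> real k * real (N - j)"
  proof -
    have "real j * real k \<le> real N * real j" using Suc.prems by (metis mult.commute mult_left_mono of_nat_0_le_iff of_nat_le_iff)
    then show ?thesis using Suc.prems by (simp add: of_nat_diff algebra_simps)
  qed
  have "real ((N - Suc j) choose (k - Suc j)) * real N ^ Suc j
      = (real (k - j) * real N / real (N - j)) * (real ((N - j) choose (k - j)) * real N ^ j)"
    by (simp add: eq2 field_simps)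
  also have "\<dots> \<le> (real (k - j) * real N / real (N - j)) * (real k ^ j * real (N choose k))"
    by (rule mult_left_mono[OF IH]) (use Nj in simp)
  also have "\<dots> \<le> real k * (real k ^ j * real (N choose k))"
    by (rule mult_right_mono) (use key Nj in \<open>simp_all add: field_simps\<close>)
  finally show ?case by simp
qed

lemma count_super:
  assumes T: "finite T" and J: "J \<subseteq> T" and k: "k \<le> card T"
  shows "real (card {S. S \<subseteq> T \<and> card S = k \<and> J \<subseteq> S}) * real (card T) ^ card J
         \<le> real k ^ card J * real (card T choose k)"
proof (cases "card J \<le> k")
  case False
  have E: "{S. S \<subseteq> T \<and> card S = k \<and> J \<subseteq> S} = {}"
  proof safe
    fix S assume "S \<subseteq> T" "J \<subseteq> S" "k = card S"
    then have "card J \<le> card S" using T by (meson card_mono rev_finite_subset)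
    then show "S \<in> {}" using False \<open>k = card S\<close> by simp
  qed
  show ?thesis unfolding E by simp
next
  case True
  let ?A = "{S. S \<subseteq> T \<and> card S = k \<and> J \<subseteq> S}"
  let ?B = "{S'. S' \<subseteq> T - J \<and> card S' = k - card J}"
  have fJ: "finite J" using T J finite_subset by blast
  have inj: "inj_on (\<lambda>S. S - J) ?A" by (rule inj_onI) blast
  have sub: "(\<lambda>S. S - J) ` ?A \<subseteq> ?B"
  proof clarify
    fix S assume "S \<subseteq> T" "J \<subseteq> S" "k = card S"
    then show "S - J \<subseteq> T - J \<and> card (S - J) = card S - card J"
      using card_Diff_subset[OF fJ] by auto
  qed
  have "card ?A \<le> card ?B"
    using card_inj_on_le[OF inj sub] T by simp
  also have "card ?B = (card T - card J) choose (k - card J)"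
    using n_subsets[of "T - J"] T card_Diff_subset[OF fJ J] by simp
  finally have "real (card ?A) \<le> real ((card T - card J) choose (k - card J))" by simp
  then have "real (card ?A) * real (card T) ^ card J \<le> real ((card T - card J) choose (k - card J)) * real (card T) ^ card J"
    by (rule mult_right_mono) simp
  also have "\<dots> \<le> real k ^ card J * real (card T choose k)"
    by (rule binom_ratio[OF True k])
  finally show ?thesis .
qed

lemma mgf_bound:
  assumes T: "finite T" and N: "N \<subseteq> T" and k: "k \<le> card T" and T0: "card T > 0"
    and b: "\<And>y. y \<in> N \<Longrightarrow> 0 \<le> b y"
  shows "(\<Sum>S\<in>{S. S \<subseteq> T \<and> card S = k}. \<Prod>y\<in>S \<inter> N. 1 + b y)
         \<le> real (card {S. S \<subseteq> T \<and> card S = k}) * (\<Prod>y\<in>N. 1 + real k / real (card T) * b y)"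
proof -
  let ?U = "{S. S \<subseteq> T \<and> card S = k}"
  define p where "p = real k / real (card T)"
  have fN: "finite N" using T N finite_subset by blast
  have fU: "finite ?U" by (rule finite_subset[of _ "Pow T"]) (use T in auto)
  have cU: "card ?U = card T choose k" using n_subsets[OF T] by simp
  have "(\<Sum>S\<in>?U. \<Prod>y\<in>S \<inter> N. 1 + b y) = (\<Sum>S\<in>?U. \<Sum>J\<in>Pow (S \<inter> N). \<Prod>y\<in>J. b y)"
  proof (rule sum.cong[OF refl])
    fix S assume "S \<in> ?U"
    have "(\<Prod>y\<in>S \<inter> N. 1 + b y) = (\<Prod>y\<in>S \<inter> N. b y + 1)" by (simp add: add.commute)
    also have "\<dots> = (\<Sum>J\<in>Pow (S \<inter> N). \<Prod>y\<in>J. b y)"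
      using prod_add[of "S \<inter> N" b "\<lambda>_. 1"] fN by simp
    finally show "(\<Prod>y\<in>S \<inter> N. 1 + b y) = (\<Sum>J\<in>Pow (S \<inter> N). \<Prod>y\<in>J. b y)" .
  qed
  also have "\<dots> = (\<Sum>S\<in>?U. \<Sum>J\<in>Pow N. if J \<subseteq> S then (\<Prod>y\<in>J. b y) else 0)"
  proof (rule sum.cong[OF refl])
    fix S assume "S \<in> ?U"
    have "Pow (S \<inter> N) = {J \<in> Pow N. J \<subseteq> S}" by auto
    then show "(\<Sum>J\<in>Pow (S \<inter> N). \<Prod>y\<in>J. b y) = (\<Sum>J\<in>Pow N. if J \<subseteq> S then (\<Prod>y\<in>J. b y) else 0)"
      using fN by (simp only: sum.inter_filter[symmetric] finite_Pow_iff)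
  qed
  also have "\<dots> = (\<Sum>J\<in>Pow N. \<Sum>S\<in>?U. if J \<subseteq> S then (\<Prod>y\<in>J. b y) else 0)"
    by (rule sum.swap)
  also have "\<dots> = (\<Sum>J\<in>Pow N. (\<Prod>y\<in>J. b y) * real (card {S. S \<subseteq> T \<and> card S = k \<and> J \<subseteq> S}))"
  proof (rule sum.cong[OF refl])
    fix J assume "J \<in> Pow N"
    have e: "{S \<in> ?U. J \<subseteq> S} = {S. S \<subseteq> T \<and> card S = k \<and> J \<subseteq> S}" by auto
    show "(\<Sum>S\<in>?U. if J \<subseteq> S then (\<Prod>y\<in>J. b y) else 0) = (\<Prod>y\<in>J. b y) * real (card {S. S \<subseteq> T \<and> card S = k \<and> J \<subseteq> S})"
      using fU by (simp add: sum.inter_filter[symmetric] e)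
  qed
  also have "\<dots> \<le> (\<Sum>J\<in>Pow N. (\<Prod>y\<in>J. b y) * (p ^ card J * real (card ?U)))"
  proof (rule sum_mono)
    fix J assume J: "J \<in> Pow N"
    have pos: "0 \<le> (\<Prod>y\<in>J. b y)" using J b by (auto intro: prod_nonneg)
    have "real (card {S. S \<subseteq> T \<and> card S = k \<and> J \<subseteq> S}) * real (card T) ^ card J
         \<le> real k ^ card J * real (card T choose k)"
      using count_super[OF T _ k, of J] J N by auto
    then have "real (card {S. S \<subseteq> T \<and> card S = k \<and> J \<subseteq> S}) \<le> p ^ card J * real (card ?U)"
      using T0 by (simp add: p_def cU power_divide field_simps)
    then show "(\<Prod>y\<in>J. b y) * real (card {S. S \<subseteq> T \<and> card S = k \<and> J \<subseteq> S}) \<le> (\<Prod>y\<in>J. b y) * (p ^ card J * real (card ?U))"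
      by (rule mult_left_mono[OF _ pos])
  qed
  also have "\<dots> = real (card ?U) * (\<Sum>J\<in>Pow N. (\<Prod>y\<in>J. p * b y))"
  proof -
    have "\<And>J. J \<in> Pow N \<Longrightarrow> (\<Prod>y\<in>J. p * b y) = p ^ card J * (\<Prod>y\<in>J. b y)"
      by (simp add: prod.distrib)
    then show ?thesis by (simp add: sum_distrib_left sum_distrib_right mult_ac)
  qed
  also have "(\<Sum>J\<in>Pow N. (\<Prod>y\<in>J. p * b y)) = (\<Prod>y\<in>N. p * b y + 1)"
    using prod_add[of N "\<lambda>y. p * b y" "\<lambda>_. 1"] fN by simp
  finally show ?thesis by (simp add: p_def add.commute)
qed
lemma bad_bound:
  fixes c :: "nat \<Rightarrow> real"
  assumes G: "simple_graph V E" and cV: "\<forall>y\<in>V. 0 \<le> c y \<and> c y \<le> 1"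
    and TV: "T \<subseteq> V" and kT: "real k \<le> real (card T) / 12" and T0: "card T > 0"
    and L0: "0 \<le> L" and x: "x \<in> V"
  shows "real (card {S \<in> {S. S \<subseteq> T \<and> card S = k}. \<not> ((\<Sum>y\<in>{y\<in>S. (x, y) \<in> E}. c y)
                 \<le> 4 * real k / real (card T) * (\<Sum>y\<in>{y\<in>V - S. (x, y) \<in> E}. c y) + 2 * L)})
         \<le> real (card {S. S \<subseteq> T \<and> card S = k}) * exp (-(3/2) * L)"
proof -
  let ?U = "{S. S \<subseteq> T \<and> card S = k}"
  let ?B = "{S \<in> ?U. \<not> ((\<Sum>y\<in>{y\<in>S. (x, y) \<in> E}. c y)
                 \<le> 4 * real k / real (card T) * (\<Sum>y\<in>{y\<in>V - S. (x, y) \<in> E}. c y) + 2 * L)}"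
  define p where "p = real k / real (card T)"
  define Nx where "Nx = {y\<in>T. (x, y) \<in> E}"
  define W where "W = (\<Sum>y\<in>Nx. c y)"
  define X where "X S = (\<Sum>y\<in>{y\<in>S. (x, y) \<in> E}. c y)" for S
  have fV: "finite V" using G by (simp add: simple_graph_def)
  have fT: "finite T" using fV TV finite_subset by blast
  have NxT: "Nx \<subseteq> T" by (auto simp: Nx_def)
  have fNx: "finite Nx" using fT NxT finite_subset by blast
  have kN: "k \<le> card T" using kT by simp
  have p0: "0 \<le> p" and p12: "p \<le> 1/12" using kT T0 by (auto simp: p_def field_simps)
  have cnn: "\<And>y. y \<in> T \<Longrightarrow> 0 \<le> c y" using cV TV by auto
  have W0: "0 \<le> W" unfolding W_def using NxT cnn by (auto intro: sum_nonneg)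
  have fU: "finite ?U" by (rule finite_subset[of _ "Pow T"]) (use fT in auto)
  have XS: "X S = (\<Sum>y\<in>S \<inter> Nx. c y)" if "S \<subseteq> T" for S
  proof -
    have "{y\<in>S. (x, y) \<in> E} = S \<inter> Nx" using that by (auto simp: Nx_def)
    then show ?thesis by (simp add: X_def)
  qed
  have large: "3 * p * W + 3/2 * L \<le> X S" if S: "S \<in> ?B" for S
  proof -
    have ST: "S \<subseteq> T" using S by simp
    let ?R = "(\<Sum>y\<in>{y\<in>V - S. (x, y) \<in> E}. c y)"
    have fail: "X S > 4 * p * ?R + 2 * L" using S by (simp add: X_def p_def)
    have X0: "0 \<le> X S" using XS[OF ST] ST NxT cnn by (auto intro: sum_nonneg)
    have "(\<Sum>y\<in>Nx - S. c y) \<le> ?R"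
    proof (rule sum_mono2)
      show "finite {y\<in>V - S. (x, y) \<in> E}" using fV by simp
      show "Nx - S \<subseteq> {y\<in>V - S. (x, y) \<in> E}" using TV by (auto simp: Nx_def)
      show "\<And>b. b \<in> {y\<in>V - S. (x, y) \<in> E} - (Nx - S) \<Longrightarrow> 0 \<le> c b" using cV by auto
    qed
    moreover have "(\<Sum>y\<in>Nx - S. c y) = W - X S"
    proof -
      have "Nx - S = Nx - (S \<inter> Nx)" by auto
      then have "(\<Sum>y\<in>Nx - S. c y) = W - (\<Sum>y\<in>S \<inter> Nx. c y)"
        using fNx by (simp add: W_def sum_diff)
      then show ?thesis using XS[OF ST] by simp
    qed
    ultimately have R: "W - X S \<le> ?R" by simp
    have "4 * p * (W - X S) \<le> 4 * p * ?R" using R p0 by (simp add: mult_left_mono)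
    then have h: "X S + 4 * p * X S > 4 * p * W + 2 * L" using fail by (simp add: algebra_simps)
    have "4 * p * X S \<le> X S / 3" using p12 X0 mult_right_mono[OF p12 X0] by simp
    then show ?thesis using h by simp
  qed
  have mgf: "(\<Sum>S\<in>?U. exp (X S)) \<le> real (card ?U) * exp (2 * p * W)"
  proof -
    define b where "b y = exp (c y) - 1" for y
    have b0: "\<And>y. y \<in> Nx \<Longrightarrow> 0 \<le> b y" using NxT cnn by (auto simp: b_def)
    have b2: "\<And>y. y \<in> Nx \<Longrightarrow> b y \<le> 2 * c y"
    proof -
      fix y assume y: "y \<in> Nx"
      then have c01: "0 \<le> c y" "c y \<le> 1" using NxT cV TV by auto
      have "exp (c y) \<le> 1 + c y + (c y)\<^sup>2" by (rule exp_bound[OF c01])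
      moreover have "(c y)\<^sup>2 \<le> c y" using c01 by (simp add: power2_eq_square mult_left_le)
      ultimately show "b y \<le> 2 * c y" by (simp add: b_def)
    qed
    have "(\<Sum>S\<in>?U. exp (X S)) = (\<Sum>S\<in>?U. \<Prod>y\<in>S \<inter> Nx. 1 + b y)"
    proof (rule sum.cong[OF refl])
      fix S assume "S \<in> ?U"
      then have ST: "S \<subseteq> T" by simp
      have fS: "finite (S \<inter> Nx)" using fNx by simp
      show "exp (X S) = (\<Prod>y\<in>S \<inter> Nx. 1 + b y)"
        using XS[OF ST] exp_sum[OF fS, of c] by (simp add: b_def)
    qed
    also have "\<dots> \<le> real (card ?U) * (\<Prod>y\<in>Nx. 1 + p * b y)"
      using mgf_bound[OF fT NxT kN T0 b0] by (simp add: p_def)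
    also have "(\<Prod>y\<in>Nx. 1 + p * b y) \<le> (\<Prod>y\<in>Nx. exp (2 * p * c y))"
    proof (rule prod_mono)
      fix y assume y: "y \<in> Nx"
      have "0 \<le> p * b y" using p0 b0[OF y] by simp
      moreover have "1 + p * b y \<le> exp (p * b y)" by simp
      moreover have "p * b y \<le> 2 * p * c y" using mult_left_mono[OF b2[OF y] p0] by simp
      ultimately show "0 \<le> 1 + p * b y \<and> 1 + p * b y \<le> exp (2 * p * c y)"
        by (meson add_nonneg_nonneg exp_le_cancel_iff order_trans zero_le_one)
    qed
    also have "(\<Prod>y\<in>Nx. exp (2 * p * c y)) = exp (2 * p * W)"
      using exp_sum[OF fNx, of "\<lambda>y. 2 * p * c y"] by (simp add: W_def sum_distrib_left)
    finally show ?thesis by (simp add: mult_left_mono)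
  qed
  have "real (card ?B) * exp (3 * p * W + 3/2 * L) = (\<Sum>S\<in>?B. exp (3 * p * W + 3/2 * L))"
    by simp
  also have "\<dots> \<le> (\<Sum>S\<in>?B. exp (X S))"
    by (rule sum_mono) (use large in simp)
  also have "\<dots> \<le> (\<Sum>S\<in>?U. exp (X S))"
    by (rule sum_mono2[OF fU]) auto
  also have "\<dots> \<le> real (card ?U) * exp (2 * p * W)" by (rule mgf)
  finally have "real (card ?B) \<le> real (card ?U) * exp (2 * p * W) / exp (3 * p * W + 3/2 * L)"
    by (simp add: field_simps)
  also have "\<dots> = real (card ?U) * exp (- (p * W) - 3/2 * L)"
  proof -
    have "exp (2 * p * W) / exp (3 * p * W + 3/2 * L) = exp (2 * p * W - (3 * p * W + 3/2 * L))"
      by (simp only: exp_diff)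
    also have "2 * p * W - (3 * p * W + 3/2 * L) = - (p * W) - 3/2 * L" by simp
    finally have e: "exp (2 * p * W) / exp (3 * p * W + 3/2 * L) = exp (- (p * W) - 3/2 * L)" .
    have "real (card ?U) * exp (2 * p * W) / exp (3 * p * W + 3/2 * L)
        = real (card ?U) * (exp (2 * p * W) / exp (3 * p * W + 3/2 * L))" by (rule times_divide_eq_right[symmetric])
    then show ?thesis by (simp only: e)
  qed
  also have "\<dots> \<le> real (card ?U) * exp (-(3/2) * L)"
    using p0 W0 by (intro mult_left_mono) auto
  finally show ?thesis .
qed


theorem lemma11:
  "\<exists>f :: nat \<Rightarrow> real. f \<longlonglongrightarrow> 0 \<and>
     (\<forall>n (V :: nat set) E (c :: nat \<Rightarrow> real) T (k :: nat).
        simple_graph V E \<and> card V = n \<and>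
        (\<forall>y\<in>V. 0 \<le> c y \<and> c y \<le> 1) \<and>
        T \<subseteq> V \<and> 2 * card T = n \<and> real k \<le> real (card T) / 12 \<longrightarrow>
        measure_pmf.prob (pmf_of_set {S. S \<subseteq> T \<and> card S = k})
          {S. \<forall>x\<in>V. (\<Sum>y\<in>{y\<in>S. (x, y) \<in> E}. c y)
                 \<le> 4 * real k / real (card T) * (\<Sum>y\<in>{y\<in>V - S. (x, y) \<in> E}. c y)
                   + 2 * ln (real n)}
        \<ge> 1 - f n)"
proof (intro exI conjI allI impI)
  define f where "f n = (if n \<le> 1 then 1 else real n * exp (-(3/2) * ln (real n)))" for n :: nat
  show "f \<longlonglongrightarrow> 0"
  proof (rule Lim_transform_eventually)
    show "(\<lambda>n::nat. real n * exp (-(3/2) * ln (real n))) \<longlonglongrightarrow> 0" by real_asymp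
    show "\<forall>\<^sub>F n in sequentially. real n * exp (-(3/2) * ln (real n)) = f n"
      using eventually_ge_at_top[of "2::nat"] by eventually_elim (simp add: f_def)
  qed
  fix n V E and c :: "nat \<Rightarrow> real" and T k
  assume A: "simple_graph V E \<and> card V = n \<and> (\<forall>y\<in>V. 0 \<le> c y \<and> c y \<le> 1) \<and>
        T \<subseteq> V \<and> 2 * card T = n \<and> real k \<le> real (card T) / 12"
  let ?U = "{S. S \<subseteq> T \<and> card S = k}"
  let ?Ev = "{S. \<forall>x\<in>V. (\<Sum>y\<in>{y\<in>S. (x, y) \<in> E}. c y)
                 \<le> 4 * real k / real (card T) * (\<Sum>y\<in>{y\<in>V - S. (x, y) \<in> E}. c y)
                   + 2 * ln (real n)}"
  show "measure_pmf.prob (pmf_of_set ?U) ?Ev \<ge> 1 - f n"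
  proof (cases "n \<le> 1")
    case True
    then show ?thesis by (simp add: f_def)
  next
    case False
    have G: "simple_graph V E" and cV: "\<forall>y\<in>V. 0 \<le> c y \<and> c y \<le> 1" and TV: "T \<subseteq> V"
      and kT: "real k \<le> real (card T) / 12" and n2: "2 * card T = n" and nV: "card V = n"
      using A by auto
    have fV: "finite V" using G by (simp add: simple_graph_def)
    have fT: "finite T" using fV TV finite_subset by blast
    have T0: "card T > 0" using n2 False by auto
    have kN: "k \<le> card T" using kT by simp
    have L0: "0 \<le> ln (real n)" using False by simp
    have fU: "finite ?U" by (rule finite_subset[of _ "Pow T"]) (use fT in auto)
    have cU: "card ?U = card T choose k" using n_subsets[OF fT] by simp
    have U0: "card ?U > 0" using cU kN by simp
    have Une: "?U \<noteq> {}" using U0 by (metis card_gt_0_iff)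
    define Bad where "Bad x = {S \<in> ?U. \<not> ((\<Sum>y\<in>{y\<in>S. (x, y) \<in> E}. c y)
                 \<le> 4 * real k / real (card T) * (\<Sum>y\<in>{y\<in>V - S. (x, y) \<in> E}. c y) + 2 * ln (real n))}" for x
    have Bx: "real (card (Bad x)) \<le> real (card ?U) * exp (-(3/2) * ln (real n))" if "x \<in> V" for x
      unfolding Bad_def by (rule bad_bound[OF G cV TV kT T0 L0 that])
    have split: "?U = (?U \<inter> ?Ev) \<union> (\<Union>x\<in>V. Bad x)" by (auto simp: Bad_def)
    have "card ?U \<le> card (?U \<inter> ?Ev) + card (\<Union>x\<in>V. Bad x)"
      by (subst split) (rule card_Un_le)
    also have "card (\<Union>x\<in>V. Bad x) \<le> (\<Sum>x\<in>V. card (Bad x))" by (rule card_UN_le[OF fV])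
    finally have "real (card ?U) \<le> real (card (?U \<inter> ?Ev)) + real (\<Sum>x\<in>V. card (Bad x))"
      by linarith
    also have "real (\<Sum>x\<in>V. card (Bad x)) \<le> (\<Sum>x\<in>V. real (card ?U) * exp (-(3/2) * ln (real n)))"
      unfolding of_nat_sum by (rule sum_mono) (rule Bx)
    also have "\<dots> = real (card ?U) * f n" using False nV by (simp add: f_def)
    finally have "real (card ?U) * (1 - f n) \<le> real (card (?U \<inter> ?Ev))" by (simp add: algebra_simps)
    then have "1 - f n \<le> real (card (?U \<inter> ?Ev)) / real (card ?U)"
      using U0 by (simp add: field_simps)
    also have "\<dots> = measure_pmf.prob (pmf_of_set ?U) ?Ev"
      using measure_pmf_of_set[OF Une fU] by simp
    finally show ?thesis .
  qed
qed

end
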